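(* Let $1<\beta<\beta^*$, $L,L^*,\rho>0$, $\bar f\in\mathcal F(\beta^*,L^*,\rho)$ and $r>0$. Set $\gamma_\varepsilon=1/\log\varepsilon^{-2}$, $W_\varepsilon=\Big(\frac{L}{\varepsilon^2}\frac{(\beta+2)(2\beta+1)}{(2\pi)^{2\beta}(\beta-1)}\Big)^{1/(2\beta+1)}$, and define the filter $\lambda^*_k=1$ if $k\le\gamma_\varepsilon W_\varepsilon$ and $\lambda^*_k=\big[1-(k/W_\varepsilon)^{\beta-1}\big]_+$ if $k>\gamma_\varepsilon W_\varepsilon$. Then, as $\varepsilon\to0$, $$\sup_{f\in\mathcal F_{r,\beta,L}(\bar f)}R^\varepsilon[f,\lambda^*]\le(1+o(1))\,C(\beta,L)\,\varepsilon^{\frac{4\beta-4}{2\beta+1}},$$ with $C(\beta,L)=\frac13\Big(\frac{\beta-1}{2\pi(\beta+2)}\Big)^{\frac{2\beta-2}{2\beta+1}}\big(L(2\beta+1)\big)^{\frac3{2\beta+1}}$.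
   Context: For an even $1$-periodic locally square integrable $g$, $g_k=\sqrt2\int_{-1/2}^{1/2}\cos(2\pi kt)g(t)dt$ and $\|g^{(\beta)}\|^2=\sum_{k\ge1}(2\pi k)^{2\beta}g_k^2$. $R^\varepsilon[f,h]=\sum_{k\ge1}(2\pi k)^2[(1-h_k)^2f_k^2+\varepsilon^2h_k^2]$ for a sequence $h\in[0,1]^{\mathbb N}$. $\mathcal F_0(\rho)$: locally square integrable, even, $1$-periodic $f$ with $|\int_{-1/2}^{1/2}f(t)\cos(2\pi t)dt|\ge\rho$; $\mathcal F(\beta^*,L^*,\rho)=\{f\in\mathcal F_0(\rho):\|f^{(\beta^* )}\|\le L^*\}$. $\mathcal F_{r,\beta,L}(\bar f)=\{\bar f+v:\ v\text{ even, 1-periodic},\ \sum_kv_k^2\le r^2,\ \sum_k(2\pi k)^{2\beta}v_k^2\le L\}$. *)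

theory Defs
  imports "HOL-Analysis.Analysis"
begin

definition even_fun :: "(real \<Rightarrow> real) \<Rightarrow> bool" where
  "even_fun g \<longleftrightarrow> (\<forall>t. g (- t) = g t)"

definition periodic1 :: "(real \<Rightarrow> real) \<Rightarrow> bool" where
  "periodic1 g \<longleftrightarrow> (\<forall>t. g (t + 1) = g t)"

definition loc_sq_int :: "(real \<Rightarrow> real) \<Rightarrow> bool" where
  "loc_sq_int g \<longleftrightarrow> g \<in> borel_measurable lborel \<and>
     (\<forall>a b. set_integrable lborel {a..b} (\<lambda>t. (g t)^2))"

definition coef :: "(real \<Rightarrow> real) \<Rightarrow> nat \<Rightarrow> real" where
  "coef g k = sqrt 2 * (LINT t:{-1/2..1/2}|lborel. cos (2 * pi * real k * t) * g t)"

definition sob_sq :: "real \<Rightarrow> (real \<Rightarrow> real) \<Rightarrow> ennreal" where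
  "sob_sq \<beta> g = (\<Sum>k. ennreal ((2 * pi * real (Suc k)) powr (2 * \<beta>) * (coef g (Suc k))^2))"

definition l2_sq :: "(real \<Rightarrow> real) \<Rightarrow> ennreal" where
  "l2_sq g = (\<Sum>k. ennreal ((coef g (Suc k))^2))"

definition risk :: "real \<Rightarrow> (real \<Rightarrow> real) \<Rightarrow> (nat \<Rightarrow> real) \<Rightarrow> ennreal" where
  "risk \<epsilon> f h = (\<Sum>k. ennreal ((2 * pi * real (Suc k))^2 *
      ((1 - h (Suc k))^2 * (coef f (Suc k))^2 + \<epsilon>^2 * (h (Suc k))^2)))"

definition F0 :: "real \<Rightarrow> (real \<Rightarrow> real) set" where
  "F0 \<rho> = {f. loc_sq_int f \<and> even_fun f \<and> periodic1 f \<and>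
     \<bar>LINT t:{-1/2..1/2}|lborel. f t * cos (2 * pi * t)\<bar> \<ge> \<rho>}"

text \<open>F(beta*,L*,rho): the condition ||f^(beta*)|| <= L* is written as
  the squared seminorm being <= L*^2.\<close>

definition Fclass :: "real \<Rightarrow> real \<Rightarrow> real \<Rightarrow> (real \<Rightarrow> real) set" where
  "Fclass \<beta>s Ls \<rho> = {f \<in> F0 \<rho>. sob_sq \<beta>s f \<le> ennreal (Ls^2)}"

definition Fball :: "real \<Rightarrow> real \<Rightarrow> real \<Rightarrow> (real \<Rightarrow> real) \<Rightarrow> (real \<Rightarrow> real) set" where
  "Fball r \<beta> L fbar = {(\<lambda>t. fbar t + v t) | v. loc_sq_int v \<and> even_fun v \<and> periodic1 v \<and>
     l2_sq v \<le> ennreal (r^2) \<and> sob_sq \<beta> v \<le> ennreal L}"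

definition gamma_eps :: "real \<Rightarrow> real" where
  "gamma_eps \<epsilon> = 1 / ln (\<epsilon> powr (-2))"

definition W_eps :: "real \<Rightarrow> real \<Rightarrow> real \<Rightarrow> real" where
  "W_eps \<beta> L \<epsilon> = (L / \<epsilon>^2 * ((\<beta> + 2) * (2 * \<beta> + 1)) / ((2 * pi) powr (2 * \<beta>) * (\<beta> - 1)))
      powr (1 / (2 * \<beta> + 1))"

definition lam_star :: "real \<Rightarrow> real \<Rightarrow> real \<Rightarrow> nat \<Rightarrow> real" where
  "lam_star \<beta> L \<epsilon> k = (if real k \<le> gamma_eps \<epsilon> * W_eps \<beta> L \<epsilon> then 1
      else max 0 (1 - (real k / W_eps \<beta> L \<epsilon>) powr (\<beta> - 1)))"

definition C_const :: "real \<Rightarrow> real \<Rightarrow> real" where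
  "C_const \<beta> L = 1/3 * ((\<beta> - 1) / (2 * pi * (\<beta> + 2))) powr ((2 * \<beta> - 2) / (2 * \<beta> + 1))
      * (L * (2 * \<beta> + 1)) powr (3 / (2 * \<beta> + 1))"

end

theory Submission
  imports Defs "HOL-Real_Asymp.Real_Asymp"
begin

lemma cos_mult_integrable:
  assumes "loc_sq_int g"
  shows "set_integrable lborel {-1/2..1/2::real} (\<lambda>t. cos (2 * pi * real k * t) * g t)"
proof -
  have m: "g \<in> borel_measurable lborel" and s: "set_integrable lborel {-1/2..1/2} (\<lambda>t. (g t)^2)"
    using assms unfolding loc_sq_int_def by auto
  have c: "set_integrable lborel {-1/2..1/2::real} (\<lambda>t. 1::real)"
    by (rule borel_integrable_atLeastAtMost') (rule continuous_on_const)
  have s2: "set_integrable lborel {-1/2..1/2} (\<lambda>t. 1 + (g t)^2)"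
    using set_integral_add(1)[OF c s] .
  show ?thesis
  proof (rule set_integrable_bound[OF s2])
    show "set_borel_measurable lborel {-1/2..1/2} (\<lambda>t. cos (2 * pi * real k * t) * g t)"
      unfolding set_borel_measurable_def using m by measurable
    show "AE x in lborel. x \<in> {-1/2..1/2} \<longrightarrow> norm (cos (2 * pi * real k * x) * g x) \<le> norm (1 + (g x)^2)"
    proof (rule AE_I2, rule impI)
      fix x
      have c1: "\<bar>cos (2 * pi * real k * x)\<bar> * \<bar>g x\<bar> \<le> 1 * \<bar>g x\<bar>"
        by (rule mult_right_mono) auto
      have h: "0 \<le> (\<bar>g x\<bar> - 1/2)^2" by simp
      have h2: "(\<bar>g x\<bar> - 1/2)^2 = (g x)^2 - \<bar>g x\<bar> + 1/4"
        by (simp add: power2_eq_square algebra_simps abs_mult_self_eq)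
      have "\<bar>cos (2 * pi * real k * x) * g x\<bar> \<le> 1 + (g x)^2"
        using c1 h h2 unfolding abs_mult by linarith
      then show "norm (cos (2 * pi * real k * x) * g x) \<le> norm (1 + (g x)^2)" by simp
    qed
  qed
qed

lemma coef_add:
  assumes "loc_sq_int a" "loc_sq_int b"
  shows "coef (\<lambda>t. a t + b t) k = coef a k + coef b k"
proof -
  have "(LINT t:{-1/2..1/2}|lborel. cos (2 * pi * real k * t) * (a t + b t))
     = (LINT t:{-1/2..1/2}|lborel. cos (2 * pi * real k * t) * a t + cos (2 * pi * real k * t) * b t)"
    by (simp add: algebra_simps)
  also have "\<dots> = (LINT t:{-1/2..1/2}|lborel. cos (2 * pi * real k * t) * a t) + (LINT t:{-1/2..1/2}|lborel. cos (2 * pi * real k * t) * b t)"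
    by (rule set_integral_add(2)[OF cos_mult_integrable[OF assms(1)] cos_mult_integrable[OF assms(2)]])
  finally show ?thesis unfolding coef_def by (simp add: algebra_simps)
qed


lemma one_minus_lam_sq:
  fixes \<beta> W x lam :: real
  assumes "1 < \<beta>" "0 < W" "0 < x" "lam = max 0 (1 - (x/W) powr (\<beta>-1))"
  shows "(1 - lam)^2 \<le> (x/W) powr (2*\<beta>-2)"
proof -
  define u where "u = (x/W) powr (\<beta>-1)"
  have u0: "u \<ge> 0" unfolding u_def by (rule powr_ge_zero)
  have uu: "(x/W) powr (2*\<beta>-2) = u^2"
    unfolding u_def using assms by (simp add: power2_eq_square powr_add[symmetric])
  have "(1 - lam)^2 \<le> u^2"
  proof (cases "u \<le> 1")
    case True then show ?thesis using assms u0 unfolding u_def[symmetric] by (simp add: max_def)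
  next
    case False then show ?thesis using assms u0 unfolding u_def[symmetric]
      by (simp add: max_def)
  qed
  then show ?thesis using uu by simp
qed

lemma sq_split:
  fixes a b \<eta> :: real assumes "0 < \<eta>"
  shows "(a+b)^2 \<le> (1+\<eta>)*b^2 + (1+1/\<eta>)*a^2"
proof -
  have "0 \<le> (\<eta>*b - a)^2/\<eta>" using assms by simp
  also have "(\<eta>*b - a)^2/\<eta> = \<eta>*b^2 - 2*a*b + a^2/\<eta>"
    using assms by (simp add: power2_eq_square field_simps)
  finally show ?thesis by (simp add: power2_eq_square algebra_simps)
qed

lemma bias_term:
  fixes a b x W \<gamma> \<eta> lam \<beta> \<beta>s :: real
  assumes "1 < \<beta>" "\<beta> < \<beta>s" "0 < W" "0 < \<gamma>" "\<gamma>*W < x" "0 < \<eta>"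
    "lam = max 0 (1 - (x/W) powr (\<beta>-1))"
  shows "(2*pi*x)^2 * (1-lam)^2 * (a+b)^2 \<le> (2*pi) powr (2-2*\<beta>) * W powr (2-2*\<beta>) *
     ((1+\<eta>) * ((2*pi*x) powr (2*\<beta>) * b^2) + (1+1/\<eta>) * (2*pi*\<gamma>*W) powr (2*\<beta>-2*\<beta>s) * ((2*pi*x) powr (2*\<beta>s) * a^2))"
proof -
  have x0: "0 < x" using assms by (smt (verit) mult_pos_pos)
  have s1: "(1-lam)^2 \<le> (x/W) powr (2*\<beta>-2)" by (rule one_minus_lam_sq[OF assms(1,3) x0 assms(7)])
  have s2: "(2*pi*x)^2 * (x/W) powr (2*\<beta>-2) = (2*pi) powr (2-2*\<beta>) * W powr (2-2*\<beta>) * (2*pi*x) powr (2*\<beta>)"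
  proof -
    have "(2*pi*x)^2 = (2*pi*x) powr 2" using x0 by (simp add: powr_numeral)
    moreover have "(x/W) powr (2*\<beta>-2) = (2*pi*x) powr (2*\<beta>-2) * (2*pi*W) powr (2 - 2*\<beta>)"
    proof -
      have e: "(2*pi*x)/(2*pi*W) = x/W" by simp
      have "((2*pi*x)/(2*pi*W)) powr (2*\<beta>-2) = (2*pi*x) powr (2*\<beta>-2) / (2*pi*W) powr (2*\<beta>-2)"
        using x0 assms by (intro powr_divide; simp)
      then have "(x/W) powr (2*\<beta>-2) = (2*pi*x) powr (2*\<beta>-2) / (2*pi*W) powr (2*\<beta>-2)"
        unfolding e .
      also have "\<dots> = (2*pi*x) powr (2*\<beta>-2) * (2*pi*W) powr (2 - 2*\<beta>)"
        using powr_minus[of "2*pi*W" "2*\<beta>-2"] by (simp add: divide_inverse)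
      finally show ?thesis .
    qed
    moreover have "(2*pi*W) powr (2 - 2*\<beta>) = (2*pi) powr (2-2*\<beta>) * W powr (2-2*\<beta>)"
      using assms by (simp add: powr_mult)
    moreover have "(2*pi*x) powr 2 * (2*pi*x) powr (2*\<beta>-2) = (2*pi*x) powr (2*\<beta>)"
      by (simp add: powr_add[symmetric])
    ultimately show ?thesis by (simp add: algebra_simps)
  qed
  have s3: "(a+b)^2 \<le> (1+\<eta>)*b^2 + (1+1/\<eta>)*a^2" by (rule sq_split[OF assms(6)])
  have s4: "(2*pi*x) powr (2*\<beta>) \<le> (2*pi*\<gamma>*W) powr (2*\<beta>-2*\<beta>s) * (2*pi*x) powr (2*\<beta>s)"
  proof -
    have "(2*pi*x) powr (2*\<beta>) = (2*pi*x) powr (2*\<beta>-2*\<beta>s) * (2*pi*x) powr (2*\<beta>s)"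
      by (simp add: powr_add[symmetric])
    also have "\<dots> \<le> (2*pi*\<gamma>*W) powr (2*\<beta>-2*\<beta>s) * (2*pi*x) powr (2*\<beta>s)"
      apply (rule mult_right_mono[OF powr_mono2'])
      using assms by auto
    finally show ?thesis .
  qed
  define P where "P = (2*pi) powr (2-2*\<beta>) * W powr (2-2*\<beta>)"
  have P0: "0 \<le> P" unfolding P_def by simp
  have "(2*pi*x)^2 * (1-lam)^2 * (a+b)^2 \<le> (2*pi*x)^2 * (x/W) powr (2*\<beta>-2) * (a+b)^2"
    by (intro mult_right_mono mult_left_mono s1) auto
  also have "\<dots> = P * (2*pi*x) powr (2*\<beta>) * (a+b)^2" using s2 P_def by simp
  also have "\<dots> \<le> P * (2*pi*x) powr (2*\<beta>) * ((1+\<eta>)*b^2 + (1+1/\<eta>)*a^2)"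
    by (intro mult_left_mono s3) (use P0 in auto)
  also have "\<dots> = P * ((1+\<eta>) * ((2*pi*x) powr (2*\<beta>) * b^2) + (1+1/\<eta>) * a^2 * (2*pi*x) powr (2*\<beta>))"
    by (simp add: algebra_simps)
  also have "\<dots> \<le> P * ((1+\<eta>) * ((2*pi*x) powr (2*\<beta>) * b^2) + (1+1/\<eta>) * a^2 * ((2*pi*\<gamma>*W) powr (2*\<beta>-2*\<beta>s) * (2*pi*x) powr (2*\<beta>s)))"
    using assms P0 by (intro mult_left_mono add_left_mono mult_left_mono[OF s4]) auto
  finally show ?thesis unfolding P_def by (simp add: algebra_simps)
qed


lemma powr_add_eq: fixes x a b c :: real assumes "a + b = c" shows "x powr a * x powr b = x powr c"
  unfolding assms[symmetric] by (rule powr_add[symmetric])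

lemma sq_powr: fixes x :: real shows "0 < x \<Longrightarrow> x^2 = x powr 2"
  by simp

lemma powr_sq: fixes x a :: real shows "(x powr a)^2 = x powr (2*a)"
  unfolding power2_eq_square by (rule powr_add_eq) simp

definition Gfun :: "real \<Rightarrow> real \<Rightarrow> real \<Rightarrow> real" where
  "Gfun \<beta> W x = x^3/3 - 2 * W powr (1-\<beta>) * x powr (\<beta>+2) / (\<beta>+2)
      + W powr (2-2*\<beta>) * x powr (2*\<beta>+1) / (2*\<beta>+1) + x^2 + x"

definition hfun :: "real \<Rightarrow> real \<Rightarrow> real \<Rightarrow> real" where
  "hfun \<beta> W x = 1 - (x/W) powr (\<beta>-1)"

lemma Gfun_deriv:
  assumes "1 < \<beta>" "0 < W" "0 < x"
  shows "(Gfun \<beta> W has_real_derivative (x^2 * (hfun \<beta> W x)^2 + 2*x + 1)) (at x)"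
proof -
  have d: "(Gfun \<beta> W has_real_derivative
      (x^2 - 2 * W powr (1-\<beta>) * x powr (\<beta>+1) + W powr (2-2*\<beta>) * x powr (2*\<beta>) + 2*x + 1)) (at x)"
  proof -
    have p1: "((\<lambda>z. z powr (\<beta>+2)) has_real_derivative (\<beta>+2) * x powr (\<beta>+1)) (at x)"
      using has_real_derivative_powr[OF assms(3), of "\<beta>+2"] by (simp add: add_diff_eq[symmetric])
    have p2: "((\<lambda>z. z powr (2*\<beta>+1)) has_real_derivative (2*\<beta>+1) * x powr (2*\<beta>)) (at x)"
      using has_real_derivative_powr[OF assms(3), of "2*\<beta>+1"] by simp
    have "(Gfun \<beta> W has_real_derivative
      (real 3 * x^(3 - Suc 0) / 3 - 2 * W powr (1-\<beta>) * ((\<beta>+2) * x powr (\<beta>+1)) / (\<beta>+2)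
       + W powr (2-2*\<beta>) * ((2*\<beta>+1) * x powr (2*\<beta>)) / (2*\<beta>+1) + real 2 * x^(2 - Suc 0) + 1)) (at x)"
      unfolding Gfun_def
      by (intro DERIV_add DERIV_diff DERIV_cdivide DERIV_cmult p1 p2 DERIV_pow DERIV_ident)
    moreover have "real 3 * x^(3 - Suc 0) / 3 - 2 * W powr (1-\<beta>) * ((\<beta>+2) * x powr (\<beta>+1)) / (\<beta>+2)
       + W powr (2-2*\<beta>) * ((2*\<beta>+1) * x powr (2*\<beta>)) / (2*\<beta>+1) + real 2 * x^(2 - Suc 0) + 1
      = x^2 - 2 * W powr (1-\<beta>) * x powr (\<beta>+1) + W powr (2-2*\<beta>) * x powr (2*\<beta>) + 2*x + 1"
    proof -
      have a: "\<beta>+2 \<noteq> 0" "2*\<beta>+1 \<noteq> 0" using assms by auto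
      show ?thesis using a by (simp add: power2_eq_square)
    qed
    ultimately show ?thesis by (simp only:)
  qed
  have c1: "(x/W) powr (\<beta>-1) = W powr (1-\<beta>) * x powr (\<beta>-1)"
  proof -
    have c1a: "(x/W) powr (\<beta>-1) = x powr (\<beta>-1) / W powr (\<beta>-1)" using assms by (intro powr_divide; simp)
    have c1b: "W powr (1-\<beta>) = inverse (W powr (\<beta>-1))" using powr_minus[of W "\<beta>-1"] by simp
    show ?thesis unfolding c1a c1b by (simp add: divide_inverse mult.commute)
  qed
  have e1: "x^2 * x powr (\<beta>-1) = x powr (\<beta>+1)"
    unfolding sq_powr[OF assms(3)] by (rule powr_add_eq) simp
  have e2: "(x powr (\<beta>-1))^2 * x^2 = x powr (2*\<beta>)"
    unfolding sq_powr[OF assms(3)] powr_sq by (rule powr_add_eq) simp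
  have e3: "(W powr (1-\<beta>))^2 = W powr (2-2*\<beta>)"
    unfolding powr_sq by simp
  have "x^2 * (hfun \<beta> W x)^2 = x^2 - 2 * W powr (1-\<beta>) * (x^2 * x powr (\<beta>-1)) + (W powr (1-\<beta>))^2 * ((x powr (\<beta>-1))^2 * x^2)"
    unfolding hfun_def c1 by (simp add: power2_eq_square algebra_simps)
  also have "\<dots> = x^2 - 2 * W powr (1-\<beta>) * x powr (\<beta>+1) + W powr (2-2*\<beta>) * x powr (2*\<beta>)"
    unfolding e1 e2 e3 ..
  finally show ?thesis using d by simp
qed

lemma Gfun_cont:
  assumes "1 < \<beta>" "0 \<le> a"
  shows "continuous_on {a..b} (Gfun \<beta> W)"
proof -
  have p: "continuous_on {a..b} (\<lambda>x. x powr c)" if "0 < c" for c :: real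
    by (rule continuous_on_powr'[where f="\<lambda>x. x" and g="\<lambda>x. c"]) (use that assms in \<open>auto intro: continuous_intros\<close>)
  have c1: "0 < \<beta> + 2" "0 < 2*\<beta>+1" using assms by auto
  show ?thesis unfolding Gfun_def
    by (intro continuous_on_add continuous_on_diff continuous_on_mult continuous_on_divide
        continuous_on_const continuous_on_power continuous_on_id p c1) (use c1 in auto)
qed

lemma Gfun_0: "1 < \<beta> \<Longrightarrow> Gfun \<beta> W 0 = 0"
  unfolding Gfun_def by simp

lemma Gfun_W:
  assumes "1 < \<beta>" "0 < W"
  shows "Gfun \<beta> W W = W^3 * (1/3 - 2/(\<beta>+2) + 1/(2*\<beta>+1)) + W^2 + W"
proof -
  have "W powr (1-\<beta>) * W powr (\<beta>+2) = W powr 3"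
    by (rule powr_add_eq) simp
  moreover have "W powr (2-2*\<beta>) * W powr (2*\<beta>+1) = W powr 3"
    by (rule powr_add_eq) simp
  moreover have "W powr 3 = W^3" using assms by simp
  ultimately show ?thesis unfolding Gfun_def by (simp add: field_simps)
qed

lemma hfun_props:
  assumes "1 < \<beta>" "0 < W" "0 \<le> x" "x \<le> y" "y \<le> W"
  shows "hfun \<beta> W y \<le> hfun \<beta> W x" "0 \<le> hfun \<beta> W y" "hfun \<beta> W x \<le> 1"
proof -
  have "(x/W) powr (\<beta>-1) \<le> (y/W) powr (\<beta>-1)"
    using assms by (intro powr_mono2) (auto simp: divide_right_mono)
  then show "hfun \<beta> W y \<le> hfun \<beta> W x" unfolding hfun_def by simp
  have "(y/W) powr (\<beta>-1) \<le> 1" using assms by (intro powr_le1) auto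
  then show "0 \<le> hfun \<beta> W y" unfolding hfun_def by simp
  show "hfun \<beta> W x \<le> 1" unfolding hfun_def by simp
qed

lemma Gfun_step:
  assumes "1 < \<beta>" "0 < W" "real (Suc k) \<le> W"
  shows "(real (Suc k))^2 * (hfun \<beta> W (real (Suc k)))^2 \<le> Gfun \<beta> W (real (Suc k)) - Gfun \<beta> W (real k)"
proof -
  define c where "c = (real (Suc k))^2 * (hfun \<beta> W (real (Suc k)))^2"
  define \<phi> where "\<phi> x = Gfun \<beta> W x - c * x" for x
  have "\<phi> (real k) \<le> \<phi> (real (Suc k))"
  proof (rule DERIV_nonneg_imp_increasing_open[of "real k" "real (Suc k)" \<phi>])
    show "real k \<le> real (Suc k)" by simp
    show "continuous_on {real k..real (Suc k)} \<phi>"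
      unfolding \<phi>_def by (intro continuous_on_diff continuous_on_mult continuous_on_const continuous_on_id Gfun_cont assms(1)) simp
    fix x assume x: "real k < x" "x < real (Suc k)"
    have x0: "0 < x" using x by linarith
    have D: "(\<phi> has_real_derivative (x^2 * (hfun \<beta> W x)^2 + 2*x + 1 - c)) (at x)"
      unfolding \<phi>_def by (rule derivative_eq_intros Gfun_deriv[OF assms(1,2) x0] refl)+ simp
    define hk where "hk = hfun \<beta> W (real (Suc k))"
    have h1: "hk \<le> hfun \<beta> W x" "0 \<le> hk" "hk \<le> 1"
      using hfun_props[OF assms(1,2), of x "real (Suc k)"] x x0 assms unfolding hk_def by auto
    have "x^2 * hk^2 \<le> x^2 * (hfun \<beta> W x)^2"
      using h1 by (intro mult_left_mono power_mono) auto
    moreover have "(2*x+1) * hk^2 \<le> 2*x + 1"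
      using h1 x0 by (intro mult_left_le) (auto simp: power_le_one)
    moreover have "(real (Suc k))^2 \<le> (x+1)^2"
      using x x0 by (intro power_mono) auto
    then have "c \<le> (x+1)^2 * hk^2" unfolding c_def hk_def by (intro mult_right_mono) auto
    ultimately have "c \<le> x^2 * (hfun \<beta> W x)^2 + 2*x + 1"
      by (simp add: power2_eq_square algebra_simps)
    then show "\<exists>y. (\<phi> has_real_derivative y) (at x) \<and> 0 \<le> y" using D by (intro exI[of _ "x^2 * (hfun \<beta> W x)^2 + 2*x + 1 - c"]) auto
  qed
  then show ?thesis unfolding \<phi>_def c_def by (simp add: algebra_simps)
qed

lemma Gfun_mono:
  assumes "1 < \<beta>" "0 < W" "0 \<le> a" "a \<le> b"
  shows "Gfun \<beta> W a \<le> Gfun \<beta> W b"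
proof (rule DERIV_nonneg_imp_increasing_open[OF assms(4)])
  show "continuous_on {a..b} (Gfun \<beta> W)" by (rule Gfun_cont[OF assms(1,3)])
  fix x assume x: "a < x" "x < b"
  then have "0 < x" using assms by linarith
  then show "\<exists>y. (Gfun \<beta> W has_real_derivative y) (at x) \<and> 0 \<le> y"
    using Gfun_deriv[OF assms(1,2)] by (intro exI conjI) (auto)
qed

lemma riemann_bound:
  assumes "1 < \<beta>" "0 < W" "real n \<le> W"
  shows "(\<Sum>k<n. (real (Suc k))^2 * (hfun \<beta> W (real (Suc k)))^2)
     \<le> W^3 * (1/3 - 2/(\<beta>+2) + 1/(2*\<beta>+1)) + W^2 + W"
proof -
  have "(\<Sum>k<n. (real (Suc k))^2 * (hfun \<beta> W (real (Suc k)))^2)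
      \<le> (\<Sum>k<n. Gfun \<beta> W (real (Suc k)) - Gfun \<beta> W (real k))"
    using assms by (intro sum_mono Gfun_step) auto
  also have "\<dots> = Gfun \<beta> W (real n) - Gfun \<beta> W (real 0)"
    by (rule sum_lessThan_telescope[where f = "\<lambda>k. Gfun \<beta> W (real k)"])
  also have "\<dots> = Gfun \<beta> W (real n)" using Gfun_0[OF assms(1)] by simp
  also have "\<dots> \<le> Gfun \<beta> W W" using assms by (intro Gfun_mono) auto
  finally show ?thesis using Gfun_W[OF assms(1,2)] by simp
qed


lemma W_eps_alt:
  "W_eps \<beta> L \<epsilon> = (L * ((\<beta> + 2) * (2 * \<beta> + 1)) / ((2 * pi) powr (2 * \<beta>) * (\<beta> - 1)) / \<epsilon>^2) powr (1 / (2 * \<beta> + 1))"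
  unfolding W_eps_def by (simp add: field_simps)

lemma W_eps_pos:
  assumes "1 < \<beta>" "0 < L" "0 < \<epsilon>" shows "0 < W_eps \<beta> L \<epsilon>"
  unfolding W_eps_alt using assms by simp

lemma W_eps_id:
  fixes \<beta> L \<epsilon> :: real
  assumes "1 < \<beta>" "0 < L" "0 < \<epsilon>"
  defines "M \<equiv> L * ((\<beta> + 2) * (2 * \<beta> + 1)) / ((2 * pi) powr (2 * \<beta>) * (\<beta> - 1))"
  shows "\<epsilon>^2 * (W_eps \<beta> L \<epsilon>)^3 = M * W_eps \<beta> L \<epsilon> powr (2 - 2*\<beta>)"
proof -
  define W where "W = W_eps \<beta> L \<epsilon>"
  have M0: "0 < M" unfolding M_def using assms by simp
  have W0: "0 < W" unfolding W_def using W_eps_pos assms by simp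
  have "W powr (2*\<beta>+1) = (M/\<epsilon>^2) powr ((1 / (2 * \<beta> + 1)) * (2*\<beta>+1))"
    unfolding W_def W_eps_alt M_def[symmetric] by (rule powr_powr)
  also have "\<dots> = M/\<epsilon>^2" using assms M0 by simp
  finally have e1: "W powr (2*\<beta>+1) = M/\<epsilon>^2" .
  have "W powr (2*\<beta>+1) * W powr (2-2*\<beta>) = W powr 3" by (rule powr_add_eq) simp
  then have "W^3 = W powr (2*\<beta>+1) * W powr (2-2*\<beta>)" using W0 by simp
  then have "\<epsilon>^2 * W^3 = M * W powr (2-2*\<beta>)" using e1 assms by simp
  then show ?thesis unfolding W_def .
qed

lemma alg: fixes \<beta> lL l2 lp lb1 lb2 lb3 le l3 :: real assumes "0 < 2*\<beta>+1"
 shows "- l3 + ((2 * \<beta> - 2) / (2 * \<beta> + 1)) * (lb1 - l2 - lp - lb2)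
       + (3 / (2 * \<beta> + 1)) * (lL + lb3) + ((4 * \<beta> - 4) / (2 * \<beta> + 1)) * le
  = (2 - 2*\<beta>) * ((lL + lb2 + lb3 - 2*\<beta>*(l2 + lp) - lb1 - 2 * le) / (2*\<beta>+1)) + (2 - 2*\<beta>) * (l2 + lp) + lL + lb3 - l3"
proof -
  define q where "q = 1 / (2*\<beta>+1)"
  have q: "q * (2*\<beta>+1) = 1" unfolding q_def using assms by simp
  have e: "\<And>a. a / (2*\<beta>+1) = a * q" unfolding q_def by simp
  show ?thesis unfolding e using q by algebra
qed

lemma const_id:
  fixes \<beta> L \<epsilon> :: real
  assumes "1 < \<beta>" "0 < L" "0 < \<epsilon>"
  shows "C_const \<beta> L * \<epsilon> powr ((4 * \<beta> - 4) / (2 * \<beta> + 1))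
     = W_eps \<beta> L \<epsilon> powr (2 - 2*\<beta>) * (2*pi) powr (2 - 2*\<beta>) * L * (2*\<beta>+1) / 3"
proof -
  define W where "W = W_eps \<beta> L \<epsilon>"
  have W0: "0 < W" unfolding W_def using W_eps_pos assms by simp
  have b: "0 < \<beta> - 1" "0 < \<beta> + 2" "0 < 2*\<beta>+1" using assms by auto
  have lnW: "ln W = (ln L + ln (\<beta>+2) + ln (2*\<beta>+1) - 2*\<beta>*(ln 2 + ln pi) - ln (\<beta>-1) - 2 * ln \<epsilon>) / (2*\<beta>+1)"
  proof -
    define X where "X = L * ((\<beta> + 2) * (2 * \<beta> + 1)) / ((2 * pi) powr (2 * \<beta>) * (\<beta> - 1)) / \<epsilon>^2"
    have X0: "0 < X" unfolding X_def using assms b by simp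
    have "ln W = ln X / (2*\<beta>+1)" unfolding W_def W_eps_alt X_def[symmetric] using X0 by (simp add: ln_powr)
    moreover have "ln X = ln L + (ln (\<beta>+2) + ln (2*\<beta>+1)) - (ln ((2 * pi) powr (2 * \<beta>)) + ln (\<beta>-1)) - ln (\<epsilon>^2)"
      unfolding X_def using assms b by (simp add: ln_mult ln_div)
    moreover have "ln ((2 * pi) powr (2 * \<beta>)) = 2*\<beta>*(ln 2 + ln pi)" by (simp add: ln_powr ln_mult)
    moreover have "ln (\<epsilon>^2) = 2 * ln \<epsilon>" using assms by (simp add: ln_realpow)
    ultimately show ?thesis by simp
  qed
  have pos1: "0 < C_const \<beta> L * \<epsilon> powr ((4 * \<beta> - 4) / (2 * \<beta> + 1))"
    unfolding C_const_def using assms b by simp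
  have pos2: "0 < W powr (2 - 2*\<beta>) * (2*pi) powr (2 - 2*\<beta>) * L * (2*\<beta>+1) / 3"
    using W0 assms b by simp
  have "ln (C_const \<beta> L * \<epsilon> powr ((4 * \<beta> - 4) / (2 * \<beta> + 1)))
     = - ln 3 + ((2 * \<beta> - 2) / (2 * \<beta> + 1)) * (ln (\<beta>-1) - ln 2 - ln pi - ln (\<beta>+2))
       + (3 / (2 * \<beta> + 1)) * (ln L + ln (2*\<beta>+1)) + ((4 * \<beta> - 4) / (2 * \<beta> + 1)) * ln \<epsilon>"
    unfolding C_const_def using assms b
    by (simp add: ln_powr ln_mult ln_div)
  also have "\<dots> = (2 - 2*\<beta>) * ln W + (2 - 2*\<beta>) * (ln 2 + ln pi) + ln L + ln (2*\<beta>+1) - ln 3"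
    unfolding lnW using b(3) by (rule alg)
  also have "\<dots> = ln (W powr (2 - 2*\<beta>) * (2*pi) powr (2 - 2*\<beta>) * L * (2*\<beta>+1) / 3)"
    using W0 assms b by (simp add: ln_powr ln_mult ln_div)
  finally show ?thesis using pos1 pos2 unfolding W_def by (simp add: ln_inj_iff)
qed


lemma ind_sum:
  fixes c :: real assumes "0 \<le> c"
  shows "(\<Sum>k<n. if real (Suc k) \<le> c then (real (Suc k))^2 else 0) \<le> c^3"
proof -
  define m where "m = nat \<lfloor>c\<rfloor>"
  have mc: "real m \<le> c" unfolding m_def using assms by linarith
  have "(\<Sum>k<n. if real (Suc k) \<le> c then (real (Suc k))^2 else 0) \<le> (\<Sum>k<n. if k \<in> {..<m} then c^2 else 0)"
  proof (rule sum_mono)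
    fix k assume "k \<in> {..<n}"
    show "(if real (Suc k) \<le> c then (real (Suc k))^2 else 0) \<le> (if k \<in> {..<m} then c^2 else 0)"
    proof (cases "real (Suc k) \<le> c")
      case True
      then have "Suc k \<le> m" unfolding m_def by (metis le_nat_floor of_nat_le_iff floor_of_nat nat_int le_floor_iff)
      then have "k \<in> {..<m}" by simp
      moreover have "(real (Suc k))^2 \<le> c^2" using True by (intro power_mono) auto
      ultimately show ?thesis using True by simp
    qed (simp add: assms)
  qed
  also have "\<dots> = (\<Sum>k\<in>{..<n} \<inter> {..<m}. c^2)" by (rule sum.inter_restrict[symmetric]) simp
  also have "\<dots> = real (card ({..<n} \<inter> {..<m})) * c^2" by (rule sum_constant)
  also have "\<dots> \<le> real m * c^2"
  proof -
    have "card ({..<n} \<inter> {..<m}) \<le> card {..<m}" by (intro card_mono) auto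
    then show ?thesis by (intro mult_right_mono) auto
  qed
  also have "\<dots> \<le> c * c^2" using mc by (intro mult_right_mono) auto
  finally show ?thesis by (simp add: power3_eq_cube power2_eq_square)
qed

lemma risk_bound_gen:
  fixes \<beta> \<beta>s L Ls \<rho> r W \<gamma> \<eta> \<epsilon> :: real and fbar f :: "real \<Rightarrow> real"
  assumes b: "1 < \<beta>" "\<beta> < \<beta>s" and W0: "0 < W" and g: "0 < \<gamma>" "\<gamma> < 1" and eta: "0 < \<eta>"
    and L0: "0 < L"
    and fb: "fbar \<in> Fclass \<beta>s Ls \<rho>" and fB: "f \<in> Fball r \<beta> L fbar"
    and lam: "lam = (\<lambda>k. if real k \<le> \<gamma> * W then 1 else max 0 (1 - (real k / W) powr (\<beta> - 1)))"
  shows "risk \<epsilon> f lam \<le> ennreal ((2*pi) powr (2-2*\<beta>) * W powr (2-2*\<beta>) * ((1+\<eta>) * L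
            + (1+1/\<eta>) * (2*pi*\<gamma>*W) powr (2*\<beta>-2*\<beta>s) * Ls^2)
         + \<epsilon>^2 * (2*pi)^2 * (W^3 * (1/3 - 2/(\<beta>+2) + 1/(2*\<beta>+1)) + W^2 + W + (\<gamma>*W)^3))"
proof -
  obtain v where f_eq: "f = (\<lambda>t. fbar t + v t)" and v: "loc_sq_int v" "sob_sq \<beta> v \<le> ennreal L"
    using fB unfolding Fball_def by auto
  have fbl: "loc_sq_int fbar" and fbs: "sob_sq \<beta>s fbar \<le> ennreal (Ls^2)"
    using fb unfolding Fclass_def F0_def by auto
  define a where "a k = coef fbar (Suc k)" for k
  define b' where "b' k = coef v (Suc k)" for k
  have cf: "coef f (Suc k) = a k + b' k" for k
    unfolding f_eq a_def b'_def by (rule coef_add[OF fbl v(1)])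
  define P where "P = (2*pi) powr (2-2*\<beta>)"
  define Z where "Z = W powr (2-2*\<beta>)"
  define R where "R = (2*pi*\<gamma>*W) powr (2*\<beta>-2*\<beta>s)"
  define SB where "SB k = (2 * pi * real (Suc k)) powr (2 * \<beta>) * (coef v (Suc k))^2" for k
  define SA where "SA k = (2 * pi * real (Suc k)) powr (2 * \<beta>s) * (coef fbar (Suc k))^2" for k
  define n where "n = nat \<lfloor>W\<rfloor>"
  define T where "T k = (2 * pi * real (Suc k))^2 * ((1 - lam (Suc k))^2 * (coef f (Suc k))^2 + \<epsilon>^2 * (lam (Suc k))^2)" for k
  define U where "U k = P * Z * (1+\<eta>) * SB k + P * Z * (1+1/\<eta>) * R * SA k" for k
  define V where "V k = \<epsilon>^2 * (2*pi)^2 * (if Suc k \<le> n then (real (Suc k))^2 * (hfun \<beta> W (real (Suc k)))^2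
      + (if real (Suc k) \<le> \<gamma> * W then (real (Suc k))^2 else 0) else 0)" for k
  have P0: "0 \<le> P" and Z0: "0 \<le> Z" and R0: "0 \<le> R" unfolding P_def Z_def R_def by auto
  have SA0: "0 \<le> SA k" and SB0: "0 \<le> SB k" for k unfolding SA_def SB_def by auto
  have U0: "0 \<le> U k" for k unfolding U_def using P0 Z0 R0 SA0 SB0 eta by auto
  have V0: "0 \<le> V k" for k
  proof -
    have "0 \<le> hfun \<beta> W (real (Suc k))" if "Suc k \<le> n"
    proof -
      have "real (Suc k) \<le> W" using that W0 unfolding n_def by linarith
      then show ?thesis using hfun_props(2)[OF b(1) W0, of 0 "real (Suc k)"] by auto
    qed
    then show ?thesis unfolding V_def by auto
  qed
  have TUV: "T k \<le> U k + V k" for k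
  proof -
    define x where "x = real (Suc k)"
    have x0: "0 < x" unfolding x_def by simp
    have bias: "(2*pi*x)^2 * ((1 - lam (Suc k))^2 * (a k + b' k)^2) \<le> U k"
    proof (cases "x \<le> \<gamma> * W")
      case True
      then have "lam (Suc k) = 1" unfolding lam x_def by simp
      then show ?thesis using U0 by simp
    next
      case False
      then have l: "lam (Suc k) = max 0 (1 - (x / W) powr (\<beta> - 1))" unfolding lam x_def by simp
      have "(2*pi*x)^2 * (1 - lam (Suc k))^2 * (a k + b' k)^2 \<le> (2*pi) powr (2-2*\<beta>) * W powr (2-2*\<beta>) *
        ((1+\<eta>) * ((2*pi*x) powr (2*\<beta>) * (b' k)^2) + (1+1/\<eta>) * (2*pi*\<gamma>*W) powr (2*\<beta>-2*\<beta>s) * ((2*pi*x) powr (2*\<beta>s) * (a k)^2))"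
        by (rule bias_term[OF b W0 g(1) _ eta l]) (use False in simp)
      also have "\<dots> = U k" unfolding U_def P_def Z_def R_def SA_def SB_def a_def b'_def x_def by (simp add: algebra_simps)
      finally show ?thesis by (simp add: algebra_simps)
    qed
    have var: "(2*pi*x)^2 * (\<epsilon>^2 * (lam (Suc k))^2) \<le> V k"
    proof (cases "Suc k \<le> n")
      case True
      then have xW: "x \<le> W" unfolding x_def n_def using W0 by linarith
      have h0: "0 \<le> hfun \<beta> W x" using hfun_props(2)[OF b(1) W0, of 0 x] xW x0 by auto
      have "(lam (Suc k))^2 \<le> (hfun \<beta> W x)^2 + (if x \<le> \<gamma> * W then 1 else 0)"
      proof (cases "x \<le> \<gamma> * W")
        case True then show ?thesis unfolding lam x_def by simp
      next
        case False
        have "lam (Suc k) = max 0 (hfun \<beta> W x)" using False unfolding lam x_def hfun_def by simp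
        then have "lam (Suc k) = hfun \<beta> W x" using h0 by simp
        then show ?thesis using False by simp
      qed
      then have "x^2 * (lam (Suc k))^2 \<le> x^2 * ((hfun \<beta> W x)^2 + (if x \<le> \<gamma> * W then 1 else 0))"
        by (rule mult_left_mono) simp
      also have "\<dots> = x^2 * (hfun \<beta> W x)^2 + (if x \<le> \<gamma> * W then x^2 else 0)"
        by (simp add: distrib_left)
      finally have "x^2 * (lam (Suc k))^2 \<le> x^2 * (hfun \<beta> W x)^2 + (if x \<le> \<gamma> * W then x^2 else 0)" .
      then have i: "\<epsilon>^2 * (2*pi)^2 * (x^2 * (lam (Suc k))^2) \<le> \<epsilon>^2 * (2*pi)^2 * (x^2 * (hfun \<beta> W x)^2 + (if x \<le> \<gamma> * W then x^2 else 0))"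
        by (intro mult_left_mono) auto
      have eq1: "(2*pi*x)^2 * (\<epsilon>^2 * (lam (Suc k))^2) = \<epsilon>^2 * (2*pi)^2 * (x^2 * (lam (Suc k))^2)"
        by (simp add: power_mult_distrib)
      have eqV: "V k = \<epsilon>^2 * (2*pi)^2 * (x^2 * (hfun \<beta> W x)^2 + (if x \<le> \<gamma> * W then x^2 else 0))"
        unfolding V_def x_def using True by simp
      show ?thesis using i eq1 eqV by linarith
    next
      case False
      then have xW: "W < x" unfolding x_def n_def using W0 by linarith
      have "\<gamma> * W < W" using g W0 by simp
      then have "\<gamma> * W < x" using xW by linarith
      moreover have "1 < (x / W) powr (\<beta> - 1)" using xW W0 b by (intro gr_one_powr) auto
      ultimately have "lam (Suc k) = 0" unfolding lam x_def by simp
      then show ?thesis using V0 by simp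
    qed
    have "T k = (2*pi*x)^2 * ((1 - lam (Suc k))^2 * (a k + b' k)^2) + (2*pi*x)^2 * (\<epsilon>^2 * (lam (Suc k))^2)"
      unfolding T_def x_def cf by (simp only: distrib_left)
    then show ?thesis using bias var by simp
  qed
  have "risk \<epsilon> f lam = (\<Sum>k. ennreal (T k))" unfolding risk_def T_def ..
  also have "\<dots> \<le> (\<Sum>k. ennreal (U k) + ennreal (V k))"
  proof (intro suminf_le summableI)
    fix k
    have "ennreal (T k) \<le> ennreal (U k + V k)" by (rule ennreal_leI[OF TUV])
    also have "\<dots> = ennreal (U k) + ennreal (V k)" using U0 V0 by (rule ennreal_plus)
    finally show "ennreal (T k) \<le> ennreal (U k) + ennreal (V k)" .
  qed
  also have "\<dots> = (\<Sum>k. ennreal (U k)) + (\<Sum>k. ennreal (V k))"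
    by (rule suminf_add[symmetric]) auto
  also have "(\<Sum>k. ennreal (U k)) = ennreal (P * Z * (1+\<eta>)) * sob_sq \<beta> v + ennreal (P * Z * (1+1/\<eta>) * R) * sob_sq \<beta>s fbar"
  proof -
    have "(\<Sum>k. ennreal (U k)) = (\<Sum>k. ennreal (P * Z * (1+\<eta>)) * ennreal (SB k) + ennreal (P * Z * (1+1/\<eta>) * R) * ennreal (SA k))"
    proof (rule suminf_cong)
      fix k
      have "ennreal (U k) = ennreal (P * Z * (1+\<eta>) * SB k) + ennreal (P * Z * (1+1/\<eta>) * R * SA k)"
        unfolding U_def using P0 Z0 R0 SA0 SB0 eta by (intro ennreal_plus) auto
      also have "\<dots> = ennreal (P * Z * (1+\<eta>)) * ennreal (SB k) + ennreal (P * Z * (1+1/\<eta>) * R) * ennreal (SA k)"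
        using P0 Z0 R0 SA0 SB0 eta by (simp add: ennreal_mult)
      finally show "ennreal (U k) = ennreal (P * Z * (1+\<eta>)) * ennreal (SB k) + ennreal (P * Z * (1+1/\<eta>) * R) * ennreal (SA k)" .
    qed
    also have "\<dots> = (\<Sum>k. ennreal (P * Z * (1+\<eta>)) * ennreal (SB k)) + (\<Sum>k. ennreal (P * Z * (1+1/\<eta>) * R) * ennreal (SA k))"
      by (rule suminf_add[symmetric]) auto
    finally show ?thesis unfolding sob_sq_def SA_def SB_def by simp
  qed
  also have "\<dots> \<le> ennreal (P * Z * (1+\<eta>)) * ennreal L + ennreal (P * Z * (1+1/\<eta>) * R) * ennreal (Ls^2)"
    by (intro add_mono mult_left_mono v(2) fbs) auto
  also have "\<dots> = ennreal (P * Z * (1+\<eta>) * L + P * Z * (1+1/\<eta>) * R * Ls^2)"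
  proof -
    have c1: "0 \<le> P * Z * (1+\<eta>)" and c2: "0 \<le> P * Z * (1+1/\<eta>) * R" using P0 Z0 R0 eta by auto
    have e1: "ennreal (P * Z * (1+\<eta>) * L) = ennreal (P * Z * (1+\<eta>)) * ennreal L"
      by (rule ennreal_mult) (use c1 L0 in auto)
    have e2: "ennreal (P * Z * (1+1/\<eta>) * R * Ls^2) = ennreal (P * Z * (1+1/\<eta>) * R) * ennreal (Ls^2)"
      by (rule ennreal_mult) (use c2 in auto)
    have e3: "ennreal (P * Z * (1+\<eta>) * L + P * Z * (1+1/\<eta>) * R * Ls^2) = ennreal (P * Z * (1+\<eta>) * L) + ennreal (P * Z * (1+1/\<eta>) * R * Ls^2)"
      by (rule ennreal_plus) (use c1 c2 L0 in auto)
    show ?thesis unfolding e3 e1 e2 ..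
  qed
  finally have part1: "risk \<epsilon> f lam \<le> ennreal (P * Z * (1+\<eta>) * L + P * Z * (1+1/\<eta>) * R * Ls^2) + (\<Sum>k. ennreal (V k))"
    by (simp add: add_right_mono)
  have Vfin: "(\<Sum>k. ennreal (V k)) = ennreal (\<Sum>k<n. V k)"
  proof -
    have "(\<Sum>k. ennreal (V k)) = (\<Sum>k\<in>{..<n}. ennreal (V k))"
      by (rule suminf_finite) (auto simp: V_def)
    also have "\<dots> = ennreal (\<Sum>k<n. V k)" using V0 by (rule sum_ennreal)
    finally show ?thesis .
  qed
  have nW: "real n \<le> W" unfolding n_def using W0 by linarith
  have Vsum: "(\<Sum>k<n. V k) \<le> \<epsilon>^2 * (2*pi)^2 * (W^3 * (1/3 - 2/(\<beta>+2) + 1/(2*\<beta>+1)) + W^2 + W + (\<gamma>*W)^3)"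
  proof -
    have "(\<Sum>k<n. V k) = (\<Sum>k<n. \<epsilon>^2 * (2*pi)^2 * ((real (Suc k))^2 * (hfun \<beta> W (real (Suc k)))^2
      + (if real (Suc k) \<le> \<gamma> * W then (real (Suc k))^2 else 0)))"
      by (rule sum.cong) (auto simp: V_def)
    also have "\<dots> = \<epsilon>^2 * (2*pi)^2 * ((\<Sum>k<n. (real (Suc k))^2 * (hfun \<beta> W (real (Suc k)))^2)
      + (\<Sum>k<n. if real (Suc k) \<le> \<gamma> * W then (real (Suc k))^2 else 0))"
      by (simp only: sum.distrib[symmetric] sum_distrib_left)
    also have "\<dots> \<le> \<epsilon>^2 * (2*pi)^2 * ((W^3 * (1/3 - 2/(\<beta>+2) + 1/(2*\<beta>+1)) + W^2 + W) + (\<gamma>*W)^3)"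
      using riemann_bound[OF b(1) W0 nW] ind_sum[of "\<gamma>*W" n] g W0
      by (intro mult_left_mono add_mono) auto
    finally show ?thesis by (simp add: algebra_simps)
  qed
  have "risk \<epsilon> f lam \<le> ennreal (P * Z * (1+\<eta>) * L + P * Z * (1+1/\<eta>) * R * Ls^2)
      + ennreal (\<epsilon>^2 * (2*pi)^2 * (W^3 * (1/3 - 2/(\<beta>+2) + 1/(2*\<beta>+1)) + W^2 + W + (\<gamma>*W)^3))"
    using part1 unfolding Vfin by (rule order_trans) (intro add_left_mono ennreal_leI Vsum)
  also have "\<dots> = ennreal (P * Z * (1+\<eta>) * L + P * Z * (1+1/\<eta>) * R * Ls^2
      + \<epsilon>^2 * (2*pi)^2 * (W^3 * (1/3 - 2/(\<beta>+2) + 1/(2*\<beta>+1)) + W^2 + W + (\<gamma>*W)^3))"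
  proof (rule ennreal_plus[symmetric])
    show "0 \<le> P * Z * (1+\<eta>) * L + P * Z * (1+1/\<eta>) * R * Ls^2"
      using P0 Z0 R0 eta L0 by simp
    show "0 \<le> \<epsilon>^2 * (2*pi)^2 * (W^3 * (1/3 - 2/(\<beta>+2) + 1/(2*\<beta>+1)) + W^2 + W + (\<gamma>*W)^3)"
      using order_trans[OF sum_nonneg Vsum] V0 by auto
  qed
  also have "\<dots> = ennreal ((2*pi) powr (2-2*\<beta>) * W powr (2-2*\<beta>) * ((1+\<eta>) * L
            + (1+1/\<eta>) * (2*pi*\<gamma>*W) powr (2*\<beta>-2*\<beta>s) * Ls^2)
         + \<epsilon>^2 * (2*pi)^2 * (W^3 * (1/3 - 2/(\<beta>+2) + 1/(2*\<beta>+1)) + W^2 + W + (\<gamma>*W)^3))"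
    unfolding P_def Z_def R_def by (simp add: algebra_simps)
  finally show ?thesis .
qed

lemma lim_gW: "0 < M \<Longrightarrow> 0 < q \<Longrightarrow> filterlim (\<lambda>\<epsilon>::real. 2*pi*(1/ln(\<epsilon> powr (-2))) * (M/\<epsilon>^2) powr q) at_top (at_right 0)"
  by real_asymp

lemma lim_W: "0 < M \<Longrightarrow> 0 < q \<Longrightarrow> filterlim (\<lambda>\<epsilon>::real. (M/\<epsilon>^2) powr q) at_top (at_right 0)"
  by real_asymp

lemma lim_g: "((\<lambda>\<epsilon>::real. 1/ln(\<epsilon> powr (-2))) \<longlongrightarrow> 0) (at_right 0)"
  by real_asymp

lemma kc_alg: fixes A B L \<beta> :: real
  assumes "A \<noteq> 0" "\<beta> - 1 \<noteq> 0" "\<beta> + 2 \<noteq> 0" "2*\<beta>+1 \<noteq> 0"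
  shows "(A*B) * (L * ((\<beta> + 2) * (2 * \<beta> + 1)) / (A * (\<beta> - 1))) * (2*(\<beta>-1)^2/(3*(\<beta>+2)*(2*\<beta>+1))) = B * L * (2*\<beta>-2)/3"
proof -
  define u where "u = inverse A"
  define v where "v = inverse (\<beta>-1)"
  define w where "w = inverse (\<beta>+2)"
  define z where "z = inverse (2*\<beta>+1)"
  have f: "u * A = 1" "v * (\<beta>-1) = 1" "w * (\<beta>+2) = 1" "z * (2*\<beta>+1) = 1"
    unfolding u_def v_def w_def z_def using assms by auto
  have g1: "inverse (A * (\<beta> - 1)) = u * v" unfolding u_def v_def by (simp add: inverse_mult_distrib)
  have g2: "inverse (3*(\<beta>+2)*(2*\<beta>+1)) = inverse 3 * w * z" unfolding w_def z_def by (simp only: inverse_mult_distrib)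
  show ?thesis unfolding divide_inverse g1 g2 using f by algebra
qed

lemma key_const:
  fixes \<beta> L :: real assumes "1 < \<beta>"
  shows "(2*pi)^2 * (L * ((\<beta> + 2) * (2 * \<beta> + 1)) / ((2 * pi) powr (2 * \<beta>) * (\<beta> - 1)))
      * (1/3 - 2/(\<beta>+2) + 1/(2*\<beta>+1)) = (2*pi) powr (2-2*\<beta>) * L * (2*\<beta>-2)/3"
proof -
  have b: "\<beta> - 1 \<noteq> 0" "\<beta> + 2 \<noteq> 0" "2*\<beta>+1 \<noteq> 0" using assms by auto
  have I: "1/3 - 2/(\<beta>+2) + 1/(2*\<beta>+1) = 2*(\<beta>-1)^2/(3*(\<beta>+2)*(2*\<beta>+1))"
    using b by (simp add: field_simps power2_eq_square)
  have p: "(2*pi) powr (2*\<beta>) * (2*pi) powr (2-2*\<beta>) = (2*pi)^2"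
  proof -
    have "(2*pi) powr (2*\<beta>) * (2*pi) powr (2-2*\<beta>) = (2*pi) powr 2" by (rule powr_add_eq) simp
    then show ?thesis by simp
  qed
  show ?thesis unfolding I p[symmetric] by (rule kc_alg) (use b in auto)
qed

lemma gamma_bounds:
  assumes "0 < \<epsilon>" "\<epsilon> < exp (-1)"
  shows "0 < gamma_eps \<epsilon>" "gamma_eps \<epsilon> < 1"
proof -
  have "ln \<epsilon> < ln (exp (-1))" using assms by (subst ln_less_cancel_iff) auto
  then have l: "ln \<epsilon> < -1" by simp
  have "ln (\<epsilon> powr (-2)) = -2 * ln \<epsilon>" using assms by (simp add: ln_powr)
  then have g: "gamma_eps \<epsilon> = 1 / (-2 * ln \<epsilon>)" unfolding gamma_eps_def by simp
  show "0 < gamma_eps \<epsilon>" unfolding g using l by simp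
  have d: "1 < -2 * ln \<epsilon>" using l by linarith
  have "1 / (-2 * ln \<epsilon>) < 1" using d by (subst divide_less_eq_1_pos) auto
  then show "gamma_eps \<epsilon> < 1" unfolding g .
qed

theorem mainTheorem12:
  fixes \<beta> \<beta>s L Ls \<rho> r :: real and fbar :: "real \<Rightarrow> real"
  assumes "1 < \<beta>" "\<beta> < \<beta>s" "L > 0" "Ls > 0" "\<rho> > 0"
    and "fbar \<in> Fclass \<beta>s Ls \<rho>" and "r > 0"
  shows "\<forall>\<delta>>0. \<forall>\<^sub>F \<epsilon> in at_right 0.
     (SUP f\<in>Fball r \<beta> L fbar. risk \<epsilon> f (lam_star \<beta> L \<epsilon>))
       \<le> ennreal ((1 + \<delta>) * C_const \<beta> L * \<epsilon> powr ((4 * \<beta> - 4) / (2 * \<beta> + 1)))"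
proof (intro allI impI)
  fix \<delta> :: real assume d0: "\<delta> > 0"
  note b = assms(1,2) and L0 = assms(3) and fb = assms(6)
  define \<eta> where "\<eta> = \<delta>/2"
  have eta0: "0 < \<eta>" unfolding \<eta>_def using d0 by simp
  define M where "M = L * ((\<beta> + 2) * (2 * \<beta> + 1)) / ((2 * pi) powr (2 * \<beta>) * (\<beta> - 1))"
  define q where "q = 1 / (2 * \<beta> + 1)"
  define P where "P = (2*pi) powr (2-2*\<beta>)"
  define I where "I = 1/3 - 2/(\<beta>+2) + 1/(2*\<beta>+1)"
  have M0: "0 < M" unfolding M_def using b L0 by simp
  have q0: "0 < q" unfolding q_def using b by simp
  have P0: "0 < P" unfolding P_def by simp
  have Wf: "W_eps \<beta> L \<epsilon> = (M/\<epsilon>^2) powr q" for \<epsilon>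
    unfolding W_eps_alt M_def q_def ..
  have gf: "gamma_eps \<epsilon> = 1/ln(\<epsilon> powr (-2))" for \<epsilon> unfolding gamma_eps_def ..
  define e where "e \<epsilon> = P*(1+1/\<eta>)*Ls^2 * (2*pi*gamma_eps \<epsilon> * W_eps \<beta> L \<epsilon>) powr (2*\<beta>-2*\<beta>s)
      + (2*pi)^2*M*(inverse (W_eps \<beta> L \<epsilon>) + (inverse (W_eps \<beta> L \<epsilon>))^2 + (gamma_eps \<epsilon>)^3)" for \<epsilon>
  have limR: "((\<lambda>\<epsilon>. (2*pi*gamma_eps \<epsilon> * W_eps \<beta> L \<epsilon>) powr (2*\<beta>-2*\<beta>s)) \<longlongrightarrow> 0) (at_right 0)"
  proof (rule tendsto_neg_powr)
    show "2*\<beta>-2*\<beta>s < 0" using b by simp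
    show "filterlim (\<lambda>\<epsilon>. 2*pi*gamma_eps \<epsilon> * W_eps \<beta> L \<epsilon>) at_top (at_right 0)"
      unfolding Wf gf using lim_gW[OF M0 q0] .
  qed
  have limiW: "((\<lambda>\<epsilon>. inverse (W_eps \<beta> L \<epsilon>)) \<longlongrightarrow> 0) (at_right 0)"
    unfolding Wf by (rule tendsto_inverse_0_at_top[OF lim_W[OF M0 q0]])
  have limg: "((\<lambda>\<epsilon>. gamma_eps \<epsilon>) \<longlongrightarrow> 0) (at_right 0)"
    unfolding gf by (rule lim_g)
  have "(e \<longlongrightarrow> P*(1+1/\<eta>)*Ls^2 * 0 + (2*pi)^2*M*(0 + 0^2 + 0^3)) (at_right 0)"
    unfolding e_def by (intro tendsto_intros limR limiW limg)
  then have lime: "(e \<longlongrightarrow> 0) (at_right 0)" by simp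
  have ev1: "\<forall>\<^sub>F \<epsilon> in at_right 0. e \<epsilon> < \<eta> * P * L"
    using order_tendstoD(2)[OF lime] eta0 P0 L0 by simp
  have ev2: "\<forall>\<^sub>F \<epsilon> in at_right (0::real). \<epsilon> \<in> {0<..<exp (-1)}"
    by (rule eventually_at_right_real) simp
  show "\<forall>\<^sub>F \<epsilon> in at_right 0.
     (SUP f\<in>Fball r \<beta> L fbar. risk \<epsilon> f (lam_star \<beta> L \<epsilon>))
       \<le> ennreal ((1 + \<delta>) * C_const \<beta> L * \<epsilon> powr ((4 * \<beta> - 4) / (2 * \<beta> + 1)))"
    using ev1 ev2
  proof eventually_elim
    case (elim \<epsilon>)
    then have e0: "0 < \<epsilon>" "\<epsilon> < exp (-1)" and ee: "e \<epsilon> < \<eta> * P * L" by auto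
    define W where "W = W_eps \<beta> L \<epsilon>"
    define \<gamma> where "\<gamma> = gamma_eps \<epsilon>"
    define Z where "Z = W powr (2-2*\<beta>)"
    define R where "R = (2*pi*\<gamma>*W) powr (2*\<beta>-2*\<beta>s)"
    have W0: "0 < W" unfolding W_def using W_eps_pos b L0 e0 by simp
    have g: "0 < \<gamma>" "\<gamma> < 1" unfolding \<gamma>_def using gamma_bounds e0 by auto
    have Z0: "0 \<le> Z" unfolding Z_def by simp
    have lam: "lam_star \<beta> L \<epsilon> = (\<lambda>k. if real k \<le> \<gamma> * W then 1 else max 0 (1 - (real k / W) powr (\<beta> - 1)))"
      unfolding lam_star_def W_def \<gamma>_def ..
    define Bnd where "Bnd = (2*pi) powr (2-2*\<beta>) * W powr (2-2*\<beta>) * ((1+\<eta>) * L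
            + (1+1/\<eta>) * (2*pi*\<gamma>*W) powr (2*\<beta>-2*\<beta>s) * Ls^2)
         + \<epsilon>^2 * (2*pi)^2 * (W^3 * (1/3 - 2/(\<beta>+2) + 1/(2*\<beta>+1)) + W^2 + W + (\<gamma>*W)^3)"
    have sup: "(SUP f\<in>Fball r \<beta> L fbar. risk \<epsilon> f (lam_star \<beta> L \<epsilon>)) \<le> ennreal Bnd"
    proof (rule SUP_least)
      fix f assume "f \<in> Fball r \<beta> L fbar"
      then show "risk \<epsilon> f (lam_star \<beta> L \<epsilon>) \<le> ennreal Bnd"
        unfolding Bnd_def by (rule risk_bound_gen[OF b W0 g eta0 L0 fb _ lam])
    qed
    have hW: "\<epsilon>^2 * W^3 = M * Z"
      unfolding W_def Z_def M_def using W_eps_id[OF b(1) L0 e0(1)] .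
    have h2: "\<epsilon>^2 * W^2 = M * Z * inverse W"
    proof -
      have "\<epsilon>^2 * W^2 = \<epsilon>^2 * W^3 * inverse W" using W0 by (simp add: power2_eq_square power3_eq_cube)
      then show ?thesis unfolding hW .
    qed
    have h1: "\<epsilon>^2 * W = M * Z * (inverse W)^2"
    proof -
      have "W = W^3 * (inverse W)^2" using W0 by (simp add: power2_eq_square power3_eq_cube field_simps)
      then have "\<epsilon>^2 * W = \<epsilon>^2 * W^3 * (inverse W)^2" by (metis mult.assoc)
      then show ?thesis unfolding hW .
    qed
    have h3: "\<epsilon>^2 * (\<gamma>*W)^3 = M * Z * \<gamma>^3"
    proof -
      have "\<epsilon>^2 * (\<gamma>*W)^3 = \<epsilon>^2 * W^3 * \<gamma>^3" by (simp add: power_mult_distrib)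
      then show ?thesis unfolding hW .
    qed
    have eeq: "e \<epsilon> = P*(1+1/\<eta>)*Ls^2 * R + (2*pi)^2*M*(inverse W + (inverse W)^2 + \<gamma>^3)"
      unfolding e_def R_def W_def \<gamma>_def ..
    have "\<epsilon>^2 * (2*pi)^2 * (W^3 * I + W^2 + W + (\<gamma>*W)^3)
        = (2*pi)^2 * (\<epsilon>^2 * W^3 * I + \<epsilon>^2 * W^2 + \<epsilon>^2 * W + \<epsilon>^2 * (\<gamma>*W)^3)"
      by (simp add: algebra_simps)
    also have "\<dots> = (2*pi)^2 * (M * Z * I + M * Z * inverse W + M * Z * (inverse W)^2 + M * Z * \<gamma>^3)"
      unfolding hW h2 h1 h3 ..
    finally have v: "\<epsilon>^2 * (2*pi)^2 * (W^3 * I + W^2 + W + (\<gamma>*W)^3)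
        = (2*pi)^2 * (M * Z * I + M * Z * inverse W + M * Z * (inverse W)^2 + M * Z * \<gamma>^3)" .
    have kc: "(2*pi)^2 * M * I = P * L * (2*\<beta>-2)/3"
      unfolding M_def I_def P_def by (rule key_const[OF b(1)])
    have "Bnd = Z * (P * L * (1+\<eta>) + (2*pi)^2 * M * I + e \<epsilon>)"
      unfolding Bnd_def I_def[symmetric] v eeq P_def[symmetric] Z_def[symmetric] R_def[symmetric]
      by (simp add: algebra_simps)
    also have "\<dots> = Z * (P * L * (1+\<eta>) + P * L * (2*\<beta>-2)/3 + e \<epsilon>)" unfolding kc ..
    also have "\<dots> \<le> Z * ((1 + \<delta>) * (P * L * (2*\<beta>+1) / 3))"
    proof (rule mult_left_mono[OF _ Z0])
      have "P * L * (1+\<eta>) + P * L * (2*\<beta>-2)/3 + e \<epsilon> = P * L * (2*\<beta>+1)/3 + \<eta> * P * L + e \<epsilon>"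
        by (simp add: field_simps)
      also have "\<dots> \<le> P * L * (2*\<beta>+1)/3 + \<delta> * (P * L * (2*\<beta>+1) / 3)"
      proof -
        have "P * L \<le> P * L * (2*\<beta>+1) / 3" using P0 L0 b by (simp add: field_simps)
        then have dd: "\<delta> * (P * L) \<le> \<delta> * (P * L * (2*\<beta>+1) / 3)" using d0 by (intro mult_left_mono) auto
        have "\<eta> * P * L + e \<epsilon> \<le> \<delta> * (P * L)" using ee unfolding \<eta>_def by simp
        then show ?thesis using dd by simp
      qed
      finally have X: "P * L * (1+\<eta>) + P * L * (2*\<beta>-2)/3 + e \<epsilon> \<le> P * L * (2*\<beta>+1)/3 + \<delta> * (P * L * (2*\<beta>+1) / 3)" .
      have Y: "(1 + \<delta>) * (P * L * (2*\<beta>+1) / 3) = P * L * (2*\<beta>+1)/3 + \<delta> * (P * L * (2*\<beta>+1) / 3)"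
        by (rule trans[OF distrib_right]) simp
      show "P * L * (1+\<eta>) + P * L * (2*\<beta>-2)/3 + e \<epsilon> \<le> (1 + \<delta>) * (P * L * (2*\<beta>+1) / 3)"
        unfolding Y by (rule X)
    qed
    also have "\<dots> = (1 + \<delta>) * C_const \<beta> L * \<epsilon> powr ((4 * \<beta> - 4) / (2 * \<beta> + 1))"
      using const_id[OF b(1) L0 e0(1)] unfolding Z_def P_def W_def by (simp add: algebra_simps)
    finally have "Bnd \<le> (1 + \<delta>) * C_const \<beta> L * \<epsilon> powr ((4 * \<beta> - 4) / (2 * \<beta> + 1))" .
    then show ?case using sup by (meson ennreal_leI order_trans)
  qed
qed

end
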